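(* Let $n,d\ge2$, $c\in\mathbb{C}$, and $f=(x_0^d + c x_1^d : x_1^d : \dots : x_n^d)$, an endomorphism of $\mathbb{P}^n_{\mathbb{C}}$. Then the critical locus $C_f = V(x_0 x_1\cdots x_n)$ is dynamically improper under $f$, and $C_f$ is preperiodic under $f$ if and only if $0$ is preperiodic under $g(z)=z^d+c$.
   Context: The critical locus of $f=(f_0:\dots:f_n)$ is $C_f=V(\det(\partial f_i/\partial x_j))$. A hypersurface $H$ is improper under $f$ if for every irreducible component $Z$ of $H$ there exist integers $0\le i_0<\dots<i_n$ with $f^{i_0}(Z)\cap\dots\cap f^{i_n}(Z)\neq\varnothing$; it is dynamically improper if improper under $f^r$ for every $r>0$. A subvariety $X$ is preperiodic under $f$ if for every irreducible component $Z$ of $X$ there exist distinct $s,t\ge0$ with $f^s(Z)=f^t(Z)$. *)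

theory Defs
  imports "HOL-Analysis.Analysis"
begin

text \<open>Projective space P^n over C is modelled by nonzero vectors in complex^'n
  (with CARD('n) = n+1); a subset of P^n is a scaling-invariant set of nonzero vectors.\<close>

inductive polyfun :: "(complex ^ 'n \<Rightarrow> complex) \<Rightarrow> bool" where
  pf_const: "polyfun (\<lambda>x. c)"
| pf_coord: "polyfun (\<lambda>x. x $ i)"
| pf_add: "polyfun p \<Longrightarrow> polyfun q \<Longrightarrow> polyfun (\<lambda>x. p x + q x)"
| pf_mult: "polyfun p \<Longrightarrow> polyfun q \<Longrightarrow> polyfun (\<lambda>x. p x * q x)"

definition hom_poly :: "(complex ^ 'n \<Rightarrow> complex) \<Rightarrow> bool" where
  "hom_poly p \<longleftrightarrow> polyfun p \<and> (\<exists>k::nat. \<forall>t x. p (t *s x) = t ^ k * p x)"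

definition proj_zero_set :: "(complex ^ 'n \<Rightarrow> complex) set \<Rightarrow> (complex ^ 'n) set" where
  "proj_zero_set S = {x. x \<noteq> 0 \<and> (\<forall>p\<in>S. p x = 0)}"

definition zariski_closed :: "(complex ^ 'n) set \<Rightarrow> bool" where
  "zariski_closed X \<longleftrightarrow> (\<exists>S. (\<forall>p\<in>S. hom_poly p) \<and> X = proj_zero_set S)"

definition irreducible_closed :: "(complex ^ 'n) set \<Rightarrow> bool" where
  "irreducible_closed X \<longleftrightarrow> zariski_closed X \<and> X \<noteq> {} \<and>
     (\<forall>Y1 Y2. zariski_closed Y1 \<and> zariski_closed Y2 \<and> X = Y1 \<union> Y2 \<longrightarrow> X = Y1 \<or> X = Y2)"

definition irr_component :: "(complex ^ 'n) set \<Rightarrow> (complex ^ 'n) set \<Rightarrow> bool" where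
  "irr_component Z X \<longleftrightarrow> irreducible_closed Z \<and> Z \<subseteq> X \<and>
     (\<forall>W. irreducible_closed W \<and> Z \<subseteq> W \<and> W \<subseteq> X \<longrightarrow> W = Z)"

definition pimg :: "(complex ^ 'n \<Rightarrow> complex ^ 'n) \<Rightarrow> (complex ^ 'n) set \<Rightarrow> (complex ^ 'n) set" where
  "pimg G Z = {t *s y | t y. t \<noteq> 0 \<and> y \<in> G ` Z}"

definition jacobian :: "(complex ^ 'n \<Rightarrow> complex ^ 'n) \<Rightarrow> complex ^ 'n \<Rightarrow> complex ^ 'n ^ 'n" where
  "jacobian F x = (\<chi> i j. deriv (\<lambda>t. F (x + (\<chi> k. if k = j then t else 0)) $ i) 0)"

definition critical_locus :: "(complex ^ 'n \<Rightarrow> complex ^ 'n) \<Rightarrow> (complex ^ 'n) set" where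
  "critical_locus F = {x. x \<noteq> 0 \<and> det (jacobian F x) = 0}"

text \<open>Improper: n = CARD('n) - 1, indices i_0 < ... < i_n.\<close>
definition improper :: "(complex ^ 'n \<Rightarrow> complex ^ 'n) \<Rightarrow> (complex ^ 'n) set \<Rightarrow> bool" where
  "improper G H \<longleftrightarrow> (\<forall>Z. irr_component Z H \<longrightarrow>
     (\<exists>i::nat \<Rightarrow> nat. (\<forall>k. Suc k < CARD('n) \<longrightarrow> i k < i (Suc k)) \<and>
        (\<Inter>k\<in>{..<CARD('n)}. (pimg G ^^ (i k)) Z) \<noteq> {}))"

definition dyn_improper :: "(complex ^ 'n \<Rightarrow> complex ^ 'n) \<Rightarrow> (complex ^ 'n) set \<Rightarrow> bool" where
  "dyn_improper F H \<longleftrightarrow> (\<forall>r>0. improper (F ^^ r) H)"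

definition preperiodic_var :: "(complex ^ 'n \<Rightarrow> complex ^ 'n) \<Rightarrow> (complex ^ 'n) set \<Rightarrow> bool" where
  "preperiodic_var F X \<longleftrightarrow> (\<forall>Z. irr_component Z X \<longrightarrow>
     (\<exists>s t. s \<noteq> t \<and> (pimg F ^^ s) Z = (pimg F ^^ t) Z))"

end

theory Submission imports Defs "HOL-Complex_Analysis.Complex_Analysis" begin



lemma ex_root: assumes "0 < d" shows "\<exists>x::complex. x^d = y"
proof (cases "y = 0")
  case True then show ?thesis using assms by (intro exI[of _ 0]) simp
next
  case False
  have "exp (Ln y / of_nat d) ^ d = exp (of_nat d * (Ln y / of_nat d))"
    by (rule exp_of_nat_mult[symmetric])
  also have "\<dots> = y" using \<open>0<d\<close> False by simp
  finally show ?thesis by blast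
qed

lemma polyfun_line: "polyfun p \<Longrightarrow> (\<lambda>t. p (u + t *s v)) holomorphic_on UNIV"
proof (induction rule: polyfun.induct)
  case (pf_coord i) show ?case by (simp, intro holomorphic_intros)
qed (auto intro: holomorphic_intros)

lemma polyfun_prod: "finite J \<Longrightarrow> polyfun (\<lambda>x. \<Prod>j\<in>J. x $ j)"
proof (induction rule: finite_induct)
  case empty then show ?case using pf_const[of 1] by simp
next
  case (insert j J) then show ?case using pf_mult[OF pf_coord[of j]] by simp
qed

lemma hom_prod: "finite J \<Longrightarrow> hom_poly (\<lambda>x::complex^'n. \<Prod>j\<in>J. x $ j)"
  unfolding hom_poly_def using polyfun_prod
  by (auto intro!: exI[of _ "card J"] simp: prod.distrib)

lemma hom_coord: "hom_poly (\<lambda>x::complex^'n. x $ i)"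
  unfolding hom_poly_def by (auto intro!: exI[of _ 1] pf_coord)

definition H :: "'n \<Rightarrow> (complex^'n) set" where
  "H i = {x. x \<noteq> 0 \<and> x $ i = 0}"

lemma closed_inter: "zariski_closed Z \<Longrightarrow> hom_poly g \<Longrightarrow> zariski_closed (Z \<inter> {x. g x = 0})"
proof -
  assume "zariski_closed Z" "hom_poly g"
  then obtain S where S: "\<forall>p\<in>S. hom_poly p" "Z = proj_zero_set S" unfolding zariski_closed_def by blast
  have "Z \<inter> {x. g x = 0} = proj_zero_set (insert g S)" using S(2) unfolding proj_zero_set_def by auto
  then show ?thesis unfolding zariski_closed_def using S(1) \<open>hom_poly g\<close> by blast
qed

lemma H_closed: "zariski_closed (H i)"
proof -
  have "H i = proj_zero_set {\<lambda>x. x $ i}" unfolding H_def proj_zero_set_def by auto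
  then show ?thesis unfolding zariski_closed_def using hom_coord by blast
qed

lemma H_irr:
  assumes "j \<noteq> (i::'n)"
  shows "irreducible_closed (H i :: (complex^'n) set)"
  unfolding irreducible_closed_def
proof (intro conjI allI impI)
  show "zariski_closed (H i)" by (rule H_closed)
  have "axis j 1 \<in> H i" using assms unfolding H_def by (auto simp: axis_def vec_eq_iff)
  then show "H i \<noteq> {}" by auto
  fix Y1 Y2 :: "(complex^'n) set"
  assume A: "zariski_closed Y1 \<and> zariski_closed Y2 \<and> H i = Y1 \<union> Y2"
  show "H i = Y1 \<or> H i = Y2"
  proof (rule ccontr)
    assume N: "\<not> (H i = Y1 \<or> H i = Y2)"
    obtain S1 where S1: "\<forall>p\<in>S1. hom_poly p" "Y1 = proj_zero_set S1" using A unfolding zariski_closed_def by blast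
    obtain S2 where S2: "\<forall>p\<in>S2. hom_poly p" "Y2 = proj_zero_set S2" using A unfolding zariski_closed_def by blast
    obtain p where p: "p \<in> H i" "p \<notin> Y1" using A N by blast
    obtain q where q: "q \<in> H i" "q \<notin> Y2" using A N by blast
    obtain f1 where f1: "f1 \<in> S1" "f1 p \<noteq> 0" using p S1(2) unfolding proj_zero_set_def H_def by auto
    obtain f2 where f2: "f2 \<in> S2" "f2 q \<noteq> 0" using q S2(2) unfolding proj_zero_set_def H_def by auto
    have pf1: "polyfun f1" using S1(1) f1(1) unfolding hom_poly_def by auto
    have pf2: "polyfun f2" using S2(1) f2(1) unfolding hom_poly_def by auto
    define w where "w = q - p"
    have h1: "(\<lambda>t. f1 (p + t *s w)) holomorphic_on UNIV" by (rule polyfun_line[OF pf1])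
    have h2: "(\<lambda>t. f2 (p + t *s w)) holomorphic_on UNIV" by (rule polyfun_line[OF pf2])
    have c1: "continuous_on UNIV (\<lambda>t. f1 (p + t *s w))" using h1 holomorphic_on_imp_continuous_on by blast
    have e: "(\<lambda>t::complex. p + t *s w) = (\<lambda>t. \<chi> k. p $ k + t * w $ k)" by (auto simp: vec_eq_iff)
    have c2: "continuous_on UNIV (\<lambda>t::complex. p + t *s w)" unfolding e by (intro continuous_intros)
    define U where "U = {t. f1 (p + t *s w) \<noteq> 0} \<inter> {t. p + t *s w \<noteq> 0}"
    have "open U" unfolding U_def
      by (intro open_Int open_Collect_neq c1 c2 continuous_on_const)
    moreover have "0 \<in> U" using f1 p unfolding U_def H_def by auto
    ultimately obtain r where r: "r > 0" "ball 0 r \<subseteq> U" using open_contains_ball by blast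
    have z: "f2 (p + t *s w) = 0" if t: "t \<in> ball 0 r" for t
    proof -
      let ?x = "p + t *s w"
      have "?x \<in> H i" using r t p q unfolding U_def H_def w_def by auto
      moreover have "?x \<notin> Y1" using r t f1 S1(2) unfolding U_def proj_zero_set_def by auto
      ultimately have "?x \<in> Y2" using A by blast
      then show ?thesis using f2 S2(2) unfolding proj_zero_set_def by auto
    qed
    have "f2 (p + 1 *s w) = 0"
      by (rule analytic_continuation_open[of "ball 0 r" UNIV _ "\<lambda>_. 0", OF _ _ _ _ _ h2])
         (use r z in auto)
    then show False using f2 unfolding w_def by simp
  qed
qed

lemma in_some_H:
  assumes Z: "irreducible_closed (Z :: (complex^'n) set)"
  shows "finite J \<Longrightarrow> Z \<subseteq> {x. x \<noteq> 0 \<and> (\<Prod>j\<in>J. x $ j) = 0} \<Longrightarrow> \<exists>j\<in>J. Z \<subseteq> H j"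
proof (induction J rule: finite_induct)
  case empty then show ?case using Z unfolding irreducible_closed_def by auto
next
  case (insert i J)
  have zc: "zariski_closed Z" using Z unfolding irreducible_closed_def by auto
  have "Z = (Z \<inter> {x. x $ i = 0}) \<union> (Z \<inter> {x. (\<Prod>j\<in>J. x $ j) = 0})"
    using insert.prems insert.hyps by auto
  moreover have "zariski_closed (Z \<inter> {x. x $ i = 0})" by (rule closed_inter[OF zc hom_coord])
  moreover have "zariski_closed (Z \<inter> {x. (\<Prod>j\<in>J. x $ j) = 0})"
    by (rule closed_inter[OF zc hom_prod[OF insert.hyps(1)]])
  ultimately have "Z = Z \<inter> {x. x $ i = 0} \<or> Z = Z \<inter> {x. (\<Prod>j\<in>J. x $ j) = 0}"
    using Z unfolding irreducible_closed_def by blast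
  then show ?case
  proof
    assume "Z = Z \<inter> {x. x $ i = 0}"
    then have "Z \<subseteq> H i" using insert.prems unfolding H_def by blast
    then show ?thesis by auto
  next
    assume "Z = Z \<inter> {x. (\<Prod>j\<in>J. x $ j) = 0}"
    then have "Z \<subseteq> {x. x \<noteq> 0 \<and> (\<Prod>j\<in>J. x $ j) = 0}" using insert.prems by blast
    then show ?thesis using insert.IH by auto
  qed
qed

lemma H_sub: "H i \<subseteq> {x::complex^'n. x \<noteq> 0 \<and> (\<Prod>j\<in>UNIV. x $ j) = 0}"
  unfolding H_def by auto

lemma H_inj: assumes "H i \<subseteq> (H j :: (complex^'n) set)" shows "i = j"
proof (rule ccontr)
  assume "i \<noteq> j"
  define v :: "complex^'n" where "v = (\<chi> k. if k = i then 0 else 1)"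
  have "v \<in> H i" using \<open>i \<noteq> j\<close> unfolding v_def H_def by (auto simp: vec_eq_iff)
  moreover have "v \<notin> H j" using \<open>i \<noteq> j\<close> unfolding v_def H_def by auto
  ultimately show False using assms by blast
qed

lemma ex_other: assumes "CARD('n) \<ge> 2" shows "\<exists>j. j \<noteq> (i::'n)"
proof (rule ccontr)
  assume "\<not> ?thesis"
  then have "UNIV = {i}" by auto
  then have "CARD('n) = 1" by (metis card.empty card_insert_disjoint empty_iff finite.emptyI One_nat_def)
  then show False using assms by simp
qed

lemma comp_iff:
  assumes "CARD('n) \<ge> 2"
  shows "irr_component Z {x::complex^'n. x \<noteq> 0 \<and> (\<Prod>j\<in>UNIV. x $ j) = 0} \<longleftrightarrow> (\<exists>i. Z = H i)"
proof
  assume c: "irr_component Z {x::complex^'n. x \<noteq> 0 \<and> (\<Prod>j\<in>UNIV. x $ j) = 0}"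
  then obtain i where "Z \<subseteq> H i" using in_some_H[of Z UNIV] unfolding irr_component_def by auto
  moreover obtain j where "j \<noteq> i" using ex_other[OF assms] by blast
  ultimately show "\<exists>i. Z = H i" using c H_irr[of j i] H_sub[of i] unfolding irr_component_def by blast
next
  assume "\<exists>i. Z = H i"
  then obtain i where Zi: "Z = H i" by blast
  obtain j where "j \<noteq> i" using ex_other[OF assms] by blast
  then have irr: "irreducible_closed (H i)" by (rule H_irr)
  show "irr_component Z {x::complex^'n. x \<noteq> 0 \<and> (\<Prod>j\<in>UNIV. x $ j) = 0}"
    unfolding irr_component_def Zi
  proof (intro conjI allI impI irr H_sub)
    fix W assume W: "irreducible_closed W \<and> H i \<subseteq> W \<and> W \<subseteq> {x::complex^'n. x \<noteq> 0 \<and> (\<Prod>j\<in>UNIV. x $ j) = 0}"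
    then obtain k where "W \<subseteq> H k" using in_some_H[of W UNIV] by auto
    then have "H i \<subseteq> H k" using W by blast
    then have "k = i" using H_inj by blast
    then show "W = H i" using W \<open>W \<subseteq> H k\<close> by blast
  qed
qed




definition Fm :: "'n \<Rightarrow> 'n \<Rightarrow> complex \<Rightarrow> nat \<Rightarrow> complex^'n \<Rightarrow> complex^'n" where
  "Fm a b c d = (\<lambda>x. \<chi> i. if i = a then x $ a ^ d + c * x $ b ^ d else x $ i ^ d)"

lemma der1: "((\<lambda>t::complex. (u + (if k = j then t else 0))^d) has_field_derivative
    (if k = j then of_nat d * u^(d-1) else 0)) (at 0)"
proof (cases "k = j")
  case True
  have "((\<lambda>t::complex. (u + t)^d) has_field_derivative of_nat d * (u + 0)^(d-1) * 1) (at 0)"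
    by (intro derivative_eq_intros) auto
  then show ?thesis using True by simp
next
  case False then show ?thesis by simp
qed

lemma jac_entry:
  fixes x :: "complex^'n"
  assumes ab: "a \<noteq> b"
  shows "jacobian (Fm a b c d) x $ i $ j =
     (if i = j then of_nat d * x$i^(d-1) else 0) + (if i = a \<and> j = b \<and> a \<noteq> b then c * (of_nat d * x$b^(d-1)) else 0)"
proof -
  have e: "(\<lambda>t. Fm a b c d (x + (\<chi> k. if k = j then t else 0)) $ i) =
     (\<lambda>t. if i = a then (x$a + (if a = j then t else 0))^d + c * (x$b + (if b = j then t else 0))^d
          else (x$i + (if i = j then t else 0))^d)"
    unfolding Fm_def by auto
  have D: "((\<lambda>t. Fm a b c d (x + (\<chi> k. if k = j then t else 0)) $ i) has_field_derivative
     ((if i = j then of_nat d * x$i^(d-1) else 0) + (if i = a \<and> j = b \<and> a \<noteq> b then c * (of_nat d * x$b^(d-1)) else 0))) (at 0)"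
  proof (cases "i = a")
    case True
    have "((\<lambda>t. (x$a + (if a = j then t else 0))^d + c * (x$b + (if b = j then t else 0))^d) has_field_derivative
       ((if a = j then of_nat d * x$a^(d-1) else 0) + c * (if b = j then of_nat d * x$b^(d-1) else 0))) (at 0)"
      by (intro derivative_intros DERIV_cmult der1)
    then show ?thesis unfolding e using True ab by (auto simp: algebra_simps)
  next
    case False
    show ?thesis unfolding e using False der1[of "x$i" i j d] by simp
  qed
  show ?thesis unfolding jacobian_def using DERIV_imp_deriv[OF D] by simp
qed

lemma det_jac:
  fixes x :: "complex^'n"
  assumes "a \<noteq> b"
  shows "det (jacobian (Fm a b c d) x) = (\<Prod>i\<in>UNIV. of_nat d * x$i^(d-1))"
proof -
  define D :: "complex^'n^'n" where "D = (\<chi> i j. if i = j then of_nat d * x$i^(d-1) else 0)"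
  have "jacobian (Fm a b c d) x = (\<chi> k. if k = a then row a D + c *s row b D else row k D)"
    using assms by (auto simp: vec_eq_iff jac_entry[OF assms] D_def row_def)
  then have "det (jacobian (Fm a b c d) x) = det D" using det_row_operation[OF assms] by simp
  also have "\<dots> = (\<Prod>i\<in>UNIV. D$i$i)" by (rule det_diagonal) (simp add: D_def)
  finally show ?thesis by (simp add: D_def)
qed

lemma crit:
  assumes "a \<noteq> b" "d \<ge> 2"
  shows "critical_locus (Fm a b c d) = {x::complex^'n. x \<noteq> 0 \<and> (\<Prod>i\<in>UNIV. x $ i) = 0}"
  unfolding critical_locus_def det_jac[OF assms(1)] using assms(2) by auto




lemma F_zero:
  fixes x :: "complex^'n"
  assumes "a \<noteq> b" "d > 0" "Fm a b c d x = 0" shows "x = 0"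
proof -
  have o: "x $ k = 0" if "k \<noteq> a" for k
  proof -
    have "Fm a b c d x $ k = 0" using assms by simp
    then show ?thesis using that assms(2) by (simp add: Fm_def)
  qed
  then have "x $ b = 0" using assms by auto
  moreover have "Fm a b c d x $ a = 0" using assms by simp
  ultimately have "x $ a ^ d = 0" using assms(2) by (simp add: Fm_def zero_power)
  then have "x $ a = 0" by simp
  then show ?thesis using o by (metis vec_eq_iff zero_index)
qed

definition L :: "'n \<Rightarrow> 'n \<Rightarrow> complex \<Rightarrow> (complex^'n) set" where
  "L a b u = {x. x \<noteq> 0 \<and> x $ a = u * x $ b}"

lemma F0: "d > 0 \<Longrightarrow> Fm a b c d 0 = 0" by (auto simp: Fm_def vec_eq_iff zero_power)

lemma pimg_L:
  assumes ab: "a \<noteq> b" and d: "d > 0"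
  shows "pimg (Fm a b c d) (L a b u) = L a b (u^d + c)"
proof
  show "pimg (Fm a b c d) (L a b u) \<subseteq> L a b (u^d + c)"
  proof
    fix y assume "y \<in> pimg (Fm a b c d) (L a b u)"
    then obtain t x where tx: "t \<noteq> 0" "x \<in> L a b u" "y = t *s Fm a b c d x" unfolding pimg_def by auto
    have "Fm a b c d x \<noteq> 0" using F_zero[OF ab d] tx(2) unfolding L_def by auto
    then have "y \<noteq> 0" using tx by (auto simp: vec_eq_iff)
    moreover have "y $ a = (u^d + c) * y $ b" using tx ab unfolding L_def Fm_def
      by (auto simp: algebra_simps power_mult_distrib)
    ultimately show "y \<in> L a b (u^d + c)" unfolding L_def by auto
  qed
next
  show "L a b (u^d + c) \<subseteq> pimg (Fm a b c d) (L a b u)"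
  proof
    fix y assume y: "y \<in> L a b (u^d + c)"
    have "\<exists>r. \<forall>z::complex. r z ^ d = z" using ex_root[OF d] by (intro choice) blast
    then obtain r :: "complex \<Rightarrow> complex" where r0: "\<forall>z. r z ^ d = z" by blast
    then have r: "\<And>z. r z ^ d = z" by blast
    define x where "x = (\<chi> k. if k = a then u * r (y $ b) else r (y $ k))"
    have Fx: "Fm a b c d x = y"
      using y ab r unfolding x_def Fm_def L_def by (auto simp: vec_eq_iff power_mult_distrib algebra_simps)
    have "x \<noteq> 0" using Fx y F0[OF d, of a b c] unfolding L_def by auto
    then have "x \<in> L a b u" using ab unfolding x_def L_def by auto
    then show "y \<in> pimg (Fm a b c d) (L a b u)" unfolding pimg_def
      by (auto intro!: exI[of _ 1] exI[of _ y] simp: Fx[symmetric])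
  qed
qed

lemma pimg_H:
  assumes ab: "a \<noteq> b" and d: "d > 0" and i: "i \<noteq> a"
  shows "pimg (Fm a b c d) (H i) = H i"
proof
  show "pimg (Fm a b c d) (H i) \<subseteq> H i"
  proof
    fix y assume "y \<in> pimg (Fm a b c d) (H i)"
    then obtain t x where tx: "t \<noteq> 0" "x \<in> H i" "y = t *s Fm a b c d x" unfolding pimg_def by auto
    have "Fm a b c d x \<noteq> 0" using F_zero[OF ab d] tx(2) unfolding H_def by auto
    then have "y \<noteq> 0" using tx by (auto simp: vec_eq_iff)
    moreover have "y $ i = 0" using tx i d unfolding H_def Fm_def by auto
    ultimately show "y \<in> H i" unfolding H_def by auto
  qed
next
  show "H i \<subseteq> pimg (Fm a b c d) (H i)"
  proof
    fix y assume y: "y \<in> H i"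
    have "\<exists>r. \<forall>z::complex. r z ^ d = z" using ex_root[OF d] by (intro choice) blast
    then obtain r :: "complex \<Rightarrow> complex" where r0: "\<forall>z. r z ^ d = z" by blast
    then have r: "\<And>z. r z ^ d = z" by blast
    have r0: "r 0 = 0" using r[of 0] d by simp
    define x where "x = (\<chi> k. if k = a then r (y $ a - c * y $ b) else r (y $ k))"
    have Fx: "Fm a b c d x = y"
      using y ab r unfolding x_def Fm_def by (auto simp: vec_eq_iff)
    have "x \<noteq> 0" using Fx y F0[OF d, of a b c] unfolding H_def by auto
    then have "x \<in> H i" using i y r0 unfolding x_def H_def by auto
    then show "y \<in> pimg (Fm a b c d) (H i)" unfolding pimg_def
      by (auto intro!: exI[of _ 1] exI[of _ y] simp: Fx[symmetric])
  qed
qed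

lemma H_L: "H a = L a b 0" unfolding H_def L_def by auto

lemma iter_H:
  assumes ab: "a \<noteq> b" and d: "d > 0"
  shows "(pimg (Fm a b c d) ^^ k) (H a) = L a b (((\<lambda>z. z ^ d + c) ^^ k) 0)"
  by (induction k) (auto simp: H_L pimg_L[OF ab d])

lemma fixed:
  assumes "j \<noteq> b" "d > 0"
  shows "Fm a b c d (axis j 1) = axis j 1"
  using assms by (auto simp: Fm_def vec_eq_iff axis_def zero_power)

lemma pimg_mem: "v \<in> Y \<Longrightarrow> G v = v \<Longrightarrow> v \<in> pimg G Y"
proof -
  assume "v \<in> Y" "G v = v"
  then have "v \<in> G ` Y" by (metis image_eqI)
  then show ?thesis unfolding pimg_def by (auto intro!: exI[of _ 1] exI[of _ v])
qed

lemma iter_mem: "v \<in> Y \<Longrightarrow> G v = v \<Longrightarrow> v \<in> (pimg G ^^ k) Y"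
  by (induction k) (auto intro: pimg_mem)




lemma ex_third: assumes "CARD('n) \<ge> 3" shows "\<exists>j::'n. j \<noteq> i \<and> j \<noteq> b"
proof (rule ccontr)
  assume "\<not> ?thesis"
  then have "UNIV \<subseteq> {i, b}" by auto
  then have "CARD('n) \<le> card {i, b}" by (intro card_mono) auto
  also have "\<dots> \<le> 2" by (simp add: card_insert_if)
  finally show False using assms by simp
qed

theorem mainTheorem12:
  fixes n d :: nat and c :: complex and a b :: "'n::finite"
    and F :: "complex ^ 'n \<Rightarrow> complex ^ 'n"
  assumes "CARD('n) = n + 1" and "n \<ge> 2" and "d \<ge> 2" and "a \<noteq> b"
    and "F = (\<lambda>x. \<chi> i. if i = a then x $ a ^ d + c * x $ b ^ d else x $ i ^ d)"
  shows "critical_locus F = {x. x \<noteq> 0 \<and> (\<Prod>i\<in>UNIV. x $ i) = 0}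
    \<and> dyn_improper F (critical_locus F)
    \<and> (preperiodic_var F (critical_locus F) \<longleftrightarrow>
         (\<exists>s t. s \<noteq> t \<and> ((\<lambda>z. z ^ d + c) ^^ s) 0 = ((\<lambda>z. z ^ d + c) ^^ t) (0::complex)))"
proof -
  have Fe: "F = Fm a b c d" using assms(5) unfolding Fm_def by simp
  have d: "d > 0" using assms(3) by simp
  have c3: "CARD('n) \<ge> 3" using assms(1,2) by simp
  then have c2: "CARD('n) \<ge> 2" by simp
  have C: "critical_locus F = {x. x \<noteq> 0 \<and> (\<Prod>i\<in>UNIV. x $ i) = 0}"
    unfolding Fe by (rule crit[OF assms(4,3)])
  have comp: "irr_component Z (critical_locus F) \<longleftrightarrow> (\<exists>i. Z = H i)" for Z
    unfolding C by (rule comp_iff[OF c2])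
  have DI: "dyn_improper F (critical_locus F)"
    unfolding dyn_improper_def improper_def
  proof (intro allI impI)
    fix r :: nat and Z assume "r > 0" "irr_component Z (critical_locus F)"
    then obtain i where Zi: "Z = H i" using comp by blast
    obtain j where j: "j \<noteq> i" "j \<noteq> b" using ex_third[OF c3] by blast
    define v :: "complex^'n" where "v = axis j 1"
    have vZ: "v \<in> Z" unfolding Zi H_def v_def using j by (auto simp: axis_def vec_eq_iff)
    have f1: "F v = v" unfolding Fe v_def by (rule fixed[OF j(2) d])
    have fx: "(F ^^ r) v = v" by (induction r) (simp_all add: f1)
    have "v \<in> (\<Inter>k\<in>{..<CARD('n)}. (pimg (F ^^ r) ^^ (id k)) Z)"
      using iter_mem[OF vZ, of "F ^^ r", OF fx] by simp
    then show "\<exists>i::nat \<Rightarrow> nat. (\<forall>k. Suc k < CARD('n) \<longrightarrow> i k < i (Suc k)) \<and>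
        (\<Inter>k\<in>{..<CARD('n)}. (pimg (F ^^ r) ^^ (i k)) Z) \<noteq> {}"
      by (intro exI[of _ id]) (simp, blast)
  qed
  let ?g = "\<lambda>z::complex. z ^ d + c"
  have PP: "preperiodic_var F (critical_locus F) \<longleftrightarrow> (\<exists>s t. s \<noteq> t \<and> (?g ^^ s) 0 = (?g ^^ t) 0)"
  proof
    assume "preperiodic_var F (critical_locus F)"
    moreover have "irr_component (H a) (critical_locus F)" using comp by blast
    ultimately obtain s t where st: "s \<noteq> t" "(pimg F ^^ s) (H a) = (pimg F ^^ t) (H a)"
      unfolding preperiodic_var_def by blast
    then have E: "L a b ((?g ^^ s) 0) = L a b ((?g ^^ t) 0)"
      unfolding Fe iter_H[OF assms(4) d] by simp
    define v :: "complex^'n" where "v = (\<chi> k. if k = a then (?g ^^ s) 0 else if k = b then 1 else 0)"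
    have "v \<in> L a b ((?g ^^ s) 0)" using assms(4) unfolding v_def L_def by (auto simp: vec_eq_iff)
    then have "v \<in> L a b ((?g ^^ t) 0)" using E by simp
    then have "(?g ^^ s) 0 = (?g ^^ t) 0" using assms(4) unfolding v_def L_def by simp
    then show "\<exists>s t. s \<noteq> t \<and> (?g ^^ s) 0 = (?g ^^ t) 0" using st(1) by blast
  next
    assume "\<exists>s t. s \<noteq> t \<and> (?g ^^ s) 0 = (?g ^^ t) 0"
    then obtain s t where st: "s \<noteq> t" "(?g ^^ s) 0 = (?g ^^ t) 0" by blast
    show "preperiodic_var F (critical_locus F)"
      unfolding preperiodic_var_def
    proof (intro allI impI)
      fix Z assume "irr_component Z (critical_locus F)"
      then obtain i where Zi: "Z = H i" using comp by blast
      show "\<exists>s t. s \<noteq> t \<and> (pimg F ^^ s) Z = (pimg F ^^ t) Z"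
      proof (cases "i = a")
        case True
        then show ?thesis using st unfolding Zi Fe by (intro exI[of _ s] exI[of _ t]) (simp add: iter_H[OF assms(4) d])
      next
        case False
        have "(pimg F ^^ 0) Z = (pimg F ^^ 1) Z" unfolding Zi Fe using pimg_H[OF assms(4) d False] by simp
        then show ?thesis by (intro exI[of _ 0] exI[of _ 1]) simp
      qed
    qed
  qed
  show ?thesis using C DI PP by (simp only:)
qed


end
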